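(* Let $(V,g)$ be a Euclidean vector space of dimension $n\ge3$, $N=\frac{(n-1)(n+2)}{2}$, $\alpha\in[1,N)$, $\theta>-1$. Let $R$ be an algebraic curvature tensor on $V$, $\mathring{R}$ its induced curvature operator of the second kind, and $S$ the scalar curvature of $R$. (1) If $\mathring{R}\in\mathcal{C}(\alpha,\theta)$, then $S\ge0$; moreover $S=0$ implies $\mathring{R}=0$ and $R=0$. (2) If $-\mathring{R}\in\mathcal{C}(\alpha,\theta)$, then $S\le0$; moreover $S=0$ implies $\mathring{R}=0$ and $R=0$. (3) If $\mathring{R}\in\mathring{\mathcal{C}}(\alpha,\theta)$, then $S>0$. (4) If $-\mathring{R}\in\mathring{\mathcal{C}}(\alpha,\theta)$, then $S<0$.
   Context: $S^2_0(V)$ is the space of traceless symmetric two-tensors (dimension $N$). An algebraic curvature tensor is $R\in S^2(\wedge^2V)$ satisfying the first Bianchi identity. $\mathring{R}=\pi\circ\overline{R}:S^2_0(V)\to S^2_0(V)$ with $\overline{R}(h)_{ij}=\sum_{k,l}R_{iklj}h_{kl}$ and $\pi$ the projection onto traceless tensors. For a symmetric operator with eigenvalues $\lambda_1\le\cdots\le\lambda_N$ and average $\bar\lambda$, write $\lambda_1+\cdots+\lambda_\alpha:=\lambda_1+\cdots+\lambda_{[\alpha]}+(\alpha-[\alpha])\lambda_{[\alpha]+1}$; $\mathcal{C}(\alpha,\theta)$ is the cone of symmetric operators on $S^2_0(V)$ with $\alpha^{-1}(\lambda_1+\cdots+\lambda_\alpha)\ge-\theta\bar\lambda$, and $\mathring{\mathcal{C}}(\alpha,\theta)$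 its interior. *)

theory Defs
  imports Complex_Main "HOL-Library.Cardinality"
begin

text \<open>The Euclidean space (V,g) of dimension n = CARD('n) is identified with
  'n \<Rightarrow> real via an orthonormal basis indexed by the finite type 'n.
  Two-tensors are represented by their components h i j in that basis.\<close>

type_synonym 'n tensor2 = "'n \<Rightarrow> 'n \<Rightarrow> real"
type_synonym 'n tensor4 = "'n \<Rightarrow> 'n \<Rightarrow> 'n \<Rightarrow> 'n \<Rightarrow> real"

definition tinner :: "'n::finite tensor2 \<Rightarrow> 'n tensor2 \<Rightarrow> real" where
  "tinner h k = (\<Sum>i\<in>UNIV. \<Sum>j\<in>UNIV. h i j * k i j)"

definition ttrace :: "'n::finite tensor2 \<Rightarrow> real" where
  "ttrace h = (\<Sum>i\<in>UNIV. h i i)"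

definition S20 :: "'n::finite tensor2 set" where
  "S20 = {h. (\<forall>i j. h i j = h j i) \<and> ttrace h = 0}"

text \<open>N = (n-1)(n+2)/2 = dim S^2_0(V).\<close>
definition dimN :: "'n::finite itself \<Rightarrow> nat" where
  "dimN _ = (CARD('n) - 1) * (CARD('n) + 2) div 2"

definition alg_curv_tensor :: "'n::finite tensor4 \<Rightarrow> bool" where
  "alg_curv_tensor R \<longleftrightarrow>
     (\<forall>i j k l. R i j k l = - R j i k l) \<and>
     (\<forall>i j k l. R i j k l = - R i j l k) \<and>
     (\<forall>i j k l. R i j k l = R k l i j) \<and>
     (\<forall>i j k l. R i j k l + R j k i l + R k i j l = 0)"

definition proj0 :: "'n::finite tensor2 \<Rightarrow> 'n tensor2" where
  "proj0 h = (\<lambda>i j. h i j - (ttrace h / real CARD('n)) * (if i = j then 1 else 0))"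

definition Rbar :: "'n::finite tensor4 \<Rightarrow> 'n tensor2 \<Rightarrow> 'n tensor2" where
  "Rbar R h = (\<lambda>i j. \<Sum>k\<in>UNIV. \<Sum>l\<in>UNIV. R i k l j * h k l)"

definition Rring :: "'n::finite tensor4 \<Rightarrow> 'n tensor2 \<Rightarrow> 'n tensor2" where
  "Rring R h = proj0 (Rbar R h)"

text \<open>Scalar curvature, with the sign convention (forced by the formula for Rbar)
  that the sectional curvature of the plane e_i,e_j is R i j i j.\<close>
definition scal :: "'n::finite tensor4 \<Rightarrow> real" where
  "scal R = (\<Sum>i\<in>UNIV. \<Sum>j\<in>UNIV. R i j i j)"

definition is_eigenlist :: "('n::finite tensor2 \<Rightarrow> 'n tensor2) \<Rightarrow> real list \<Rightarrow> bool" where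
  "is_eigenlist A lam \<longleftrightarrow>
     length lam = dimN TYPE('n) \<and> sorted lam \<and>
     (\<exists>e :: nat \<Rightarrow> 'n tensor2.
        (\<forall>p < length lam. e p \<in> S20) \<and>
        (\<forall>p < length lam. \<forall>q < length lam. tinner (e p) (e q) = (if p = q then 1 else 0)) \<and>
        (\<forall>h \<in> S20. h = (\<lambda>i j. \<Sum>p < length lam. tinner h (e p) * e p i j)) \<and>
        (\<forall>p < length lam. A (e p) = (\<lambda>i j. lam ! p * e p i j)))"

text \<open>lam_1 + ... + lam_alpha := lam_1 + ... + lam_[alpha] + (alpha - [alpha]) lam_([alpha]+1)
  (0-based list indexing).\<close>
definition eig_partial :: "real list \<Rightarrow> real \<Rightarrow> real" where
  "eig_partial lam \<alpha> =
     (\<Sum>p < nat \<lfloor>\<alpha>\<rfloor>. lam ! p) + (\<alpha> - of_int \<lfloor>\<alpha>\<rfloor>) * lam ! nat \<lfloor>\<alpha>\<rfloor>"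

definition eig_avg :: "real list \<Rightarrow> real" where
  "eig_avg lam = sum_list lam / real (length lam)"

definition in_cone :: "('n::finite tensor2 \<Rightarrow> 'n tensor2) \<Rightarrow> real \<Rightarrow> real \<Rightarrow> bool" where
  "in_cone A \<alpha> \<theta> \<longleftrightarrow>
     (\<exists>lam. is_eigenlist A lam \<and> eig_partial lam \<alpha> / \<alpha> \<ge> - \<theta> * eig_avg lam)"

definition in_cone_interior :: "('n::finite tensor2 \<Rightarrow> 'n tensor2) \<Rightarrow> real \<Rightarrow> real \<Rightarrow> bool" where
  "in_cone_interior A \<alpha> \<theta> \<longleftrightarrow>
     (\<exists>lam. is_eigenlist A lam \<and> eig_partial lam \<alpha> / \<alpha> > - \<theta> * eig_avg lam)"

end

theory Submission
  imports Defs
begin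

lemma ifmult1: "(if P then (1::real) else 0) * x = (if P then x else 0)" by simp
lemma ifmult2: "x * (if P then (1::real) else 0) = (if P then x else 0)" by simp

lemma tinner_proj0:
  fixes X e :: "'n::finite tensor2"
  assumes "ttrace e = 0"
  shows "tinner (proj0 X) e = tinner X e"
proof -
  have "tinner (proj0 X) e = (\<Sum>i\<in>UNIV. \<Sum>j\<in>UNIV. X i j * e i j - (ttrace X / real CARD('n)) * (if i = j then e i j else 0))"
    unfolding tinner_def proj0_def by (intro sum.cong refl) (auto simp: algebra_simps)
  also have "\<dots> = tinner X e - (ttrace X / real CARD('n)) * ttrace e"
    unfolding tinner_def ttrace_def
    by (simp add: sum_subtractf if_distrib[of "\<lambda>x. _ * x"] cong: if_cong)
       (simp add: sum_distrib_left[symmetric] sum_divide_distrib[symmetric])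
  finally show ?thesis using assms by simp
qed

definition Pk :: "'n::finite \<Rightarrow> 'n \<Rightarrow> 'n \<Rightarrow> 'n \<Rightarrow> real" where
  "Pk k l i j = ((if k = i \<and> l = j then 1 else 0) + (if k = j \<and> l = i then 1 else 0)) / 2
     - (if k = l \<and> i = j then 1 else 0) / real CARD('n)"

lemma Pk_S20:
  fixes i j :: "'n::finite"
  shows "(\<lambda>x y. Pk x y i j) \<in> S20"
proof -
  have "ttrace (\<lambda>x y. Pk x y i j) = (\<Sum>x\<in>UNIV. ((if x = i \<and> x = j then 1 else 0) + (if x = j \<and> x = i then 1 else 0)) / 2
     - (if i = j then 1 else 0) / real CARD('n))"
    unfolding ttrace_def Pk_def by simp
  also have "\<dots> = 0"
  proof (cases "i = j")
    case True then show ?thesis by (simp add: sum_subtractf)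
  next
    case False
    have h: "\<And>x. (x = i \<and> x = j) = False" "\<And>x. (x = j \<and> x = i) = False" using False by auto
    show ?thesis using False by (simp only: h) simp
  qed
  finally show ?thesis unfolding S20_def Pk_def by auto
qed




lemma dsum1:
  fixes f :: "'a::finite \<Rightarrow> 'b::finite \<Rightarrow> real"
  shows "(\<Sum>x\<in>UNIV. \<Sum>y\<in>UNIV. if x = i \<and> y = j then f x y else (0::real)) = f i j"
proof -
  have "\<And>x. (\<Sum>y\<in>UNIV. if x = i \<and> y = j then f x y else (0::real)) = (if x = i then f x j else 0)"
    by (cases "x = i") auto
  then show ?thesis by simp
qed

lemma dsum2:
  fixes f :: "'a::finite \<Rightarrow> 'a \<Rightarrow> real"
  shows "(\<Sum>x\<in>UNIV. \<Sum>y\<in>UNIV. if x = y then f x y else (0::real)) = (\<Sum>x\<in>UNIV. f x x)"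
  by simp

lemma ifdiv: "(if P then a else 0) / (c::real) = (if P then a / c else 0)" by simp

lemma tinner_Pk:
  fixes e :: "'n::finite tensor2"
  assumes "e \<in> S20"
  shows "tinner (\<lambda>x y. Pk x y i j) e = e i j"
proof -
  have sym: "e j i = e i j" and tr: "ttrace e = 0" using assms unfolding S20_def by auto
  have pt: "\<And>x y. Pk x y i j * e x y = (if x = i \<and> y = j then e x y else 0) / 2 + (if x = j \<and> y = i then e x y else 0) / 2
     - (if i = j then 1 else 0) * (if x = y then e x y else 0) / real CARD('n)"
    unfolding Pk_def by (simp add: ring_distribs add_divide_distrib diff_divide_distrib if_distrib[where f="\<lambda>z. z * _"] if_distrib[where f="\<lambda>z. z / _"])
  have "tinner (\<lambda>x y. Pk x y i j) e = (\<Sum>x\<in>UNIV. \<Sum>y\<in>UNIV. if x = i \<and> y = j then e x y else 0) / 2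
     + (\<Sum>x\<in>UNIV. \<Sum>y\<in>UNIV. if x = j \<and> y = i then e x y else 0) / 2
     - (if i = j then 1 else 0) * (\<Sum>x\<in>UNIV. \<Sum>y\<in>UNIV. if x = y then e x y else 0) / real CARD('n)"
    unfolding tinner_def pt
    by (simp add: sum.distrib sum_subtractf sum_divide_distrib sum_distrib_left ifdiv)
  also have "\<dots> = (e i j + e j i)/2 - (if i = j then 1 else 0) * ttrace e / real CARD('n)"
    unfolding dsum1 dsum2 ttrace_def by (simp add: add_divide_distrib)
  finally show ?thesis using sym tr by simp
qed

lemma kernel:
  fixes e :: "nat \<Rightarrow> 'n::finite tensor2"
  assumes e_in: "\<forall>p<N. e p \<in> S20"
    and compl: "\<forall>h\<in>S20. h = (\<lambda>i j. \<Sum>p<N. tinner h (e p) * e p i j)"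
  shows "(\<Sum>p<N. e p i j * e p k l) = Pk k l i j"
proof -
  have "(\<lambda>x y. Pk x y i j) = (\<lambda>x y. \<Sum>p<N. tinner (\<lambda>x y. Pk x y i j) (e p) * e p x y)"
    using compl Pk_S20 by blast
  then have "Pk k l i j = (\<Sum>p<N. tinner (\<lambda>x y. Pk x y i j) (e p) * e p k l)"
    by (metis (no_types, lifting))
  also have "\<dots> = (\<Sum>p<N. e p i j * e p k l)"
    using e_in tinner_Pk by (intro sum.cong) auto
  finally show ?thesis by simp
qed

lemma swap_test:
  fixes R :: "'n::finite tensor4" and e :: "nat \<Rightarrow> 'n tensor2"
  shows "(\<Sum>p<N. \<Sum>i\<in>UNIV. \<Sum>j\<in>UNIV. (\<Sum>k\<in>UNIV. \<Sum>l\<in>UNIV. R i k l j * e p k l) * e p i j)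
     = (\<Sum>i\<in>UNIV. \<Sum>j\<in>UNIV. \<Sum>k\<in>UNIV. \<Sum>l\<in>UNIV. R i k l j * (\<Sum>p<N. e p k l * e p i j))"
  by (simp only: sum_distrib_right sum_distrib_left mult.assoc sum.swap[where A=UNIV and B="{..<N}"])

lemma curv_sum:
  fixes R :: "'n::finite tensor4"
  assumes "alg_curv_tensor R"
  shows "(\<Sum>i\<in>UNIV. \<Sum>j\<in>UNIV. \<Sum>k\<in>UNIV. \<Sum>l\<in>UNIV. R i k l j * Pk i j k l)
      = scal R * (1/2 + 1 / real CARD('n))"
proof -
  have a1: "\<And>i j k l. R i j k l = - R j i k l" and a2: "\<And>i j k l. R i j k l = - R i j l k"
    using assms unfolding alg_curv_tensor_def by blast+
  have z: "\<And>i j. R i i j j = 0" using a1 by (metis add.inverse_neutral neg_equal_zero)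
  have w: "\<And>i k. R i k k i = - R i k i k" using a2 by metis
  have pt: "\<And>i j k l. R i k l j * Pk i j k l = (if k = i \<and> l = j then R i k l j else 0) / 2
     + (if k = j \<and> l = i then R i k l j else 0) / 2
     - (if i = j then 1 else 0) * (if k = l then R i k l j else 0) / real CARD('n)"
    unfolding Pk_def by (auto simp: ring_distribs add_divide_distrib diff_divide_distrib)
  have "(\<Sum>i\<in>UNIV. \<Sum>j\<in>UNIV. \<Sum>k\<in>UNIV. \<Sum>l\<in>UNIV. R i k l j * Pk i j k l)
      = (\<Sum>i\<in>UNIV. \<Sum>j\<in>UNIV. R i i j j / 2 + R i j i j / 2
          - (if i = j then 1 else 0) * (\<Sum>k\<in>UNIV. R i k k j) / real CARD('n))"
    unfolding pt
    by (simp add: sum.distrib sum_subtractf sum_divide_distrib[symmetric] sum_distrib_left[symmetric] dsum1 dsum2)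
  also have "\<dots> = (\<Sum>i\<in>UNIV. \<Sum>j\<in>UNIV. R i j i j / 2)
          - (\<Sum>i\<in>UNIV. \<Sum>k\<in>UNIV. R i k k i) / real CARD('n)"
    by (simp add: z sum.distrib sum_subtractf sum_divide_distrib ifdiv ifmult1)
  also have "\<dots> = scal R * (1/2 + 1 / real CARD('n))"
    unfolding scal_def w by (simp add: sum_divide_distrib[symmetric] sum_negf algebra_simps)
  finally show ?thesis .
qed

lemma Rring_lin:
  fixes R :: "'n::finite tensor4"
  shows "Rring R (\<lambda>i j. \<Sum>p<N. c p * g p i j) = (\<lambda>i j. \<Sum>p<N. c p * Rring R (g p) i j)"
  unfolding Rring_def proj0_def Rbar_def ttrace_def
  by (simp add: sum_distrib_left sum_distrib_right sum_subtractf right_diff_distrib sum_divide_distrib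
        mult.assoc mult.left_commute sum.swap[where B="{..<N}"])

lemma Rbar_h1:
  fixes R :: "'n::finite tensor4"
  shows "Rbar R (\<lambda>x y. (if x = a \<and> y = b then 1 else 0) + (if x = b \<and> y = a then 1 else 0)) i j
     = R i a b j + R i b a j"
proof -
  have pt: "\<And>k l. R i k l j * ((if k = a \<and> l = b then 1 else 0) + (if k = b \<and> l = a then 1 else 0))
     = (if k = a \<and> l = b then R i k l j else 0) + (if k = b \<and> l = a then R i k l j else 0)" by (simp only: distrib_left ifmult2)
  show ?thesis unfolding Rbar_def pt by (simp add: sum.distrib dsum1)
qed

lemma Rbar_h2:
  fixes R :: "'n::finite tensor4"
  shows "Rbar R (\<lambda>x y. (if x = a \<and> y = a then 1 else 0) - (if x = b \<and> y = b then 1 else 0)) i j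
     = R i a a j - R i b b j"
proof -
  have pt: "\<And>k l. R i k l j * ((if k = a \<and> l = a then 1 else 0) - (if k = b \<and> l = b then 1 else 0))
     = (if k = a \<and> l = a then R i k l j else 0) - (if k = b \<and> l = b then R i k l j else 0)" by (simp only: right_diff_distrib ifmult2)
  show ?thesis unfolding Rbar_def pt by (simp add: sum_subtractf dsum1)
qed

lemma h1_S20:
  fixes a b :: "'n::finite"
  assumes "a \<noteq> b"
  shows "(\<lambda>x y. (if x = a \<and> y = b then 1 else 0) + (if x = b \<and> y = a then 1 else 0)) \<in> S20"
proof -
  have h: "\<And>x. (x = a \<and> x = b) = False" "\<And>x. (x = b \<and> x = a) = False" using assms by auto
  have tr: "(\<Sum>x\<in>UNIV. (if x = a \<and> x = b then 1 else 0) + (if x = b \<and> x = a then 1 else 0)) = (0::real)"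
    by (simp only: h) simp
  have c: "\<And>i j::'n. (j = a \<and> i = b) = (i = b \<and> j = a)" "\<And>i j::'n. (j = b \<and> i = a) = (i = a \<and> j = b)" by blast+
  have sy: "(if i = a \<and> j = b then 1 else 0) + (if i = b \<and> j = a then 1 else 0)
     = (if j = a \<and> i = b then 1 else 0) + (if j = b \<and> i = a then (1::real) else 0)" for i j :: 'n
    by (subst c(1), subst c(2)) (rule add.commute)
  show ?thesis unfolding S20_def ttrace_def mem_Collect_eq using tr sy by blast
qed

lemma h2_S20:
  fixes a b :: "'n::finite"
  shows "(\<lambda>x y. (if x = a \<and> y = a then 1 else 0) - (if x = b \<and> y = b then 1 else 0)) \<in> S20"
proof -
  have c: "\<And>i j::'n. (j = a \<and> i = a) = (i = a \<and> j = a)" "\<And>i j::'n. (j = b \<and> i = b) = (i = b \<and> j = b)" by blast+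
  have tr: "(\<Sum>x\<in>UNIV. (if x = a \<and> x = a then 1 else 0) - (if x = b \<and> x = b then 1 else 0)) = (0::real)"
    by (simp only: conj_absorb) (simp add: sum_subtractf)
  have sy: "(if i = a \<and> j = a then 1 else 0) - (if i = b \<and> j = b then 1 else 0)
     = (if j = a \<and> i = a then 1 else 0) - (if j = b \<and> i = b then (1::real) else 0)" for i j :: 'n
    by (subst c(1), subst c(2)) (rule refl)
  show ?thesis unfolding S20_def ttrace_def mem_Collect_eq using tr sy by blast
qed

lemma Rring_zero_entries:
  fixes R :: "'n::finite tensor4"
  assumes "Rring R h = (\<lambda>i j. 0)"
  shows "i \<noteq> j \<Longrightarrow> Rbar R h i j = 0" and "Rbar R h i i = Rbar R h j j"
proof -
  have e: "Rbar R h i j - ttrace (Rbar R h) / real CARD('n) * (if i = j then 1 else 0) = 0" for i j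
    using fun_cong[OF fun_cong[OF assms, of i], of j] unfolding Rring_def proj0_def by simp
  show "i \<noteq> j \<Longrightarrow> Rbar R h i j = 0" using e[of i j] by simp
  show "Rbar R h i i = Rbar R h j j" using e[of i i] e[of j j] by simp
qed

lemma R_zero:
  fixes R :: "'n::finite tensor4"
  assumes alg: "alg_curv_tensor R" and H: "\<forall>h\<in>S20. Rring R h = (\<lambda>i j. 0)"
  shows "R = (\<lambda>i j k l. 0)"
proof -
  have s1: "\<And>i j k l. R i j k l = - R j i k l" and s2: "\<And>i j k l. R i j k l = - R i j l k"
    and s3: "\<And>i j k l. R i j k l = R k l i j" and bi: "\<And>i j k l. R i j k l + R j k i l + R k i j l = 0"
    using alg unfolding alg_curv_tensor_def by blast+
  have E1: "R i a b j + R i b a j = 0" if "a \<noteq> b" "i \<noteq> j" for i j a b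
    using Rring_zero_entries(1)[OF H[rule_format, OF h1_S20[OF that(1)]] that(2)] by (simp only: Rbar_h1)
  have E2: "R i a a j - R i b b j = 0" if "i \<noteq> j" for i j a b
    using Rring_zero_entries(1)[OF H[rule_format, OF h2_S20] that] by (simp only: Rbar_h2)
  have E3: "R i a a i - R i b b i = R j a a j - R j b b j" for i j a b
    using Rring_zero_entries(2)[OF H[rule_format, OF h2_S20]] by (simp only: Rbar_h2)
  have z1: "R i i k l = 0" for i k l using s1[of i i k l] by linarith
  have z2: "R i j k k = 0" for i j k using s2[of i j k k] by linarith
  have F1: "R a b a b = 0" for a b
  proof -
    have "R a a a a - R a b b a = R b a a b - R b b b b" using E3 .
    moreover have "R a b b a = - R a b a b" using s2[of a b b a] .
    moreover have "R b a a b = - R a b a b" using s1[of b a a b] .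
    ultimately show ?thesis using z1 by simp
  qed
  have F2: "R i a a j = 0" if "i \<noteq> j" for i j a
    using E2[OF that, of a i] z1 by simp
  have "R i j k l = 0" for i j k l
  proof -
    consider "i = j" | "k = l" | "i \<noteq> j" "k \<noteq> l" "j = k"
      | "i \<noteq> j" "k \<noteq> l" "j \<noteq> k" "i = l"
      | "i \<noteq> j" "k \<noteq> l" "j \<noteq> k" "i \<noteq> l" "i = k"
      | "i \<noteq> j" "k \<noteq> l" "j \<noteq> k" "i \<noteq> l" "i \<noteq> k" "j = l"
      | "i \<noteq> j" "k \<noteq> l" "j \<noteq> k" "i \<noteq> l" "i \<noteq> k" "j \<noteq> l" by blast
    then show ?thesis
    proof cases
      case 1 then show ?thesis using z1 by simp
    next
      case 2 then show ?thesis using z2 by simp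
    next
      case 3 then show ?thesis
        using F1[of i j] F2[of i l j] s2[of i j j i] by (cases "i = l") auto
    next
      case 4 then show ?thesis using F2[of k j i] s3[of i j k i] by simp
    next
      case 5
      then show ?thesis
        using F1[of i j] F2[of j l i] s1[of i j i l] by (cases "j = l") auto
    next
      case 6 then show ?thesis using F2[of i k j] s2[of i j k j] by simp
    next
      case 7
      have x1: "R i j k l + R i k j l = 0" using E1[of j k i l] 7 by simp
      have x2: "R j k i l + R j i k l = 0" using E1[of k i j l] 7 by simp
      have x3: "R j i k l = - R i j k l" "R k i j l = - R i k j l" using s1[of j i k l] s1[of k i j l] by simp_all
      show ?thesis using x1 x2 x3 bi[of i j k l] by linarith
    qed
  qed
  then show ?thesis by blast
qed

lemma cone_core:
  fixes lam :: "real list" and \<alpha> \<theta> :: real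
  assumes srt: "sorted lam" and len: "length lam = N"
    and a1: "1 \<le> \<alpha>" and aN: "\<alpha> < real N"
  shows "real N * eig_partial lam \<alpha> \<le> \<alpha> * sum_list lam"
    and "sum_list lam = 0 \<Longrightarrow> eig_partial lam \<alpha> \<ge> 0 \<Longrightarrow> \<forall>p<N. lam ! p = 0"
proof -
  define m where "m = nat \<lfloor>\<alpha>\<rfloor>"
  define f where "f = \<alpha> - of_int \<lfloor>\<alpha>\<rfloor>"
  have fl1: "\<lfloor>\<alpha>\<rfloor> \<ge> 1" using a1 by simp
  have mreal: "real m = of_int \<lfloor>\<alpha>\<rfloor>" unfolding m_def using fl1 by simp
  have f0: "0 \<le> f" and f1: "f < 1" unfolding f_def by linarith+
  have am: "\<alpha> = real m + f" unfolding f_def mreal by simp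
  have m1: "m \<ge> 1" unfolding m_def using fl1 by linarith
  have mN: "m < N" using am f0 aN by linarith
  define c where "c = lam ! m"
  define A where "A = (\<Sum>p<m. lam ! p)"
  define B where "B = (\<Sum>p\<in>{Suc m..<N}. lam ! p)"
  define P where "P = eig_partial lam \<alpha>"
  define T where "T = sum_list lam"
  have P_eq: "P = A + f * c" unfolding P_def eig_partial_def A_def c_def f_def m_def by simp
  have T_eq: "T = A + c + B"
  proof -
    have "T = (\<Sum>p\<in>{0..<N}. lam ! p)" unfolding T_def sum_list_sum_nth len ..
    also have "\<dots> = (\<Sum>p\<in>{0..<Suc m}. lam ! p) + B"
      unfolding B_def using mN by (subst sum.atLeastLessThan_concat) auto
    also have "(\<Sum>p\<in>{0..<Suc m}. lam ! p) = A + c"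
      unfolding A_def c_def by (simp add: atLeast0LessThan)
    finally show ?thesis .
  qed
  have lo: "\<And>p. p < m \<Longrightarrow> lam ! p \<le> c"
    unfolding c_def using srt mN len by (intro sorted_nth_mono) auto
  have hi: "\<And>p. p \<in> {Suc m..<N} \<Longrightarrow> c \<le> lam ! p"
    unfolding c_def using srt mN len by (intro sorted_nth_mono) auto
  have hA: "A \<le> real m * c"
    unfolding A_def using sum_bounded_above[of "{..<m}" "\<lambda>p. lam ! p" c] lo by simp
  have hB: "(real N - real m - 1) * c \<le> B"
  proof -
    have "real (card {Suc m..<N}) * c \<le> B"
      unfolding B_def using sum_bounded_below[of "{Suc m..<N}" c "\<lambda>p. lam ! p"] hi by simp
    moreover have "real (card {Suc m..<N}) = real N - real m - 1" using mN by (simp add: of_nat_diff)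
    ultimately show ?thesis by (simp add: algebra_simps)
  qed
  have hPa: "P \<le> \<alpha> * c" using P_eq hA am by (simp add: algebra_simps)
  have hTP: "(real N - \<alpha>) * c \<le> T - P" using P_eq T_eq hB am by (simp add: algebra_simps)
  have g1: "(real N - \<alpha>) * P \<le> (real N - \<alpha>) * (\<alpha> * c)"
    using hPa aN by (intro mult_left_mono) auto
  have g2: "\<alpha> * ((real N - \<alpha>) * c) \<le> \<alpha> * (T - P)"
    using hTP a1 by (intro mult_left_mono) auto
  from g1 g2 show "real N * eig_partial lam \<alpha> \<le> \<alpha> * sum_list lam"
    unfolding P_def[symmetric] T_def[symmetric] by (simp add: algebra_simps)
  assume T0: "sum_list lam = 0" and P0: "eig_partial lam \<alpha> \<ge> 0"
  then have T0': "T = 0" and P0': "P \<ge> 0" unfolding T_def P_def by auto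
  have "\<alpha> * c \<ge> 0" using hPa P0' by linarith
  then have c0: "c \<ge> 0" using a1 by (simp add: zero_le_mult_iff)
  have "(real N - \<alpha>) * c \<le> 0" using hTP T0' P0' by linarith
  then have "c \<le> 0" using aN by (simp add: mult_le_0_iff)
  then have cz: "c = 0" using c0 by simp
  have Az: "A = 0" using P_eq hA cz P0' by simp
  have Bz: "B = 0" using T_eq T0' Az cz by simp
  have lo0: "\<forall>p<m. lam ! p = 0"
  proof -
    have "(\<Sum>p<m. - lam ! p) = 0" using Az unfolding A_def by (simp add: sum_negf)
    then have "\<forall>p\<in>{..<m}. - lam ! p = 0"
      using lo cz by (subst sum_nonneg_eq_0_iff[symmetric]) auto
    then show ?thesis by auto
  qed
  have hi0: "\<forall>p\<in>{Suc m..<N}. lam ! p = 0"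
    using Bz hi cz unfolding B_def by (subst sum_nonneg_eq_0_iff[symmetric]) auto
  show "\<forall>p<N. lam ! p = 0"
  proof (intro allI impI)
    fix p assume "p < N"
    then consider "p < m" | "p = m" | "p \<in> {Suc m..<N}" by force
    then show "lam ! p = 0" using lo0 hi0 cz c_def by cases auto
  qed
qed

lemma trace_Rring:
  fixes R :: "'n::finite tensor4" and e :: "nat \<Rightarrow> 'n tensor2"
  assumes alg: "alg_curv_tensor R"
    and e_in: "\<forall>p<N. e p \<in> S20"
    and compl: "\<forall>h\<in>S20. h = (\<lambda>i j. \<Sum>p<N. tinner h (e p) * e p i j)"
  shows "(\<Sum>p<N. tinner (Rring R (e p)) (e p)) = scal R * (1/2 + 1 / real CARD('n))"
proof -
  have "(\<Sum>p<N. tinner (Rring R (e p)) (e p)) = (\<Sum>p<N. tinner (Rbar R (e p)) (e p))"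
    using e_in by (intro sum.cong refl) (simp add: Rring_def tinner_proj0 S20_def)
  also have "\<dots> = (\<Sum>p<N. \<Sum>i\<in>UNIV. \<Sum>j\<in>UNIV. (\<Sum>k\<in>UNIV. \<Sum>l\<in>UNIV. R i k l j * e p k l) * e p i j)"
    unfolding tinner_def Rbar_def ..
  also have "\<dots> = (\<Sum>i\<in>UNIV. \<Sum>j\<in>UNIV. \<Sum>k\<in>UNIV. \<Sum>l\<in>UNIV. R i k l j * (\<Sum>p<N. e p k l * e p i j))"
    by (rule swap_test)
  also have "\<dots> = (\<Sum>i\<in>UNIV. \<Sum>j\<in>UNIV. \<Sum>k\<in>UNIV. \<Sum>l\<in>UNIV. R i k l j * Pk i j k l)"
    by (simp only: kernel[OF e_in compl])
  also have "\<dots> = scal R * (1/2 + 1 / real CARD('n))" by (rule curv_sum[OF alg])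
  finally show ?thesis .
qed

lemma tinner_scale: "tinner (\<lambda>i j. c * X i j) Y = c * tinner X Y"
  unfolding tinner_def by (simp add: sum_distrib_left mult.assoc)

lemma eig_sum:
  fixes R :: "'n::finite tensor4" and A :: "'n tensor2 \<Rightarrow> 'n tensor2"
  assumes alg: "alg_curv_tensor R" and eig: "is_eigenlist A lam"
    and As: "\<And>h. A h = (\<lambda>i j. \<sigma> * Rring R h i j)"
  shows "sum_list lam = \<sigma> * (scal R * (1/2 + 1 / real CARD('n)))"
proof -
  from eig obtain e :: "nat \<Rightarrow> 'n tensor2" where
      e_in: "\<forall>p < length lam. e p \<in> S20" and
      orth: "\<forall>p < length lam. \<forall>q < length lam. tinner (e p) (e q) = (if p = q then 1 else 0)" and
      compl: "\<forall>h \<in> S20. h = (\<lambda>i j. \<Sum>p < length lam. tinner h (e p) * e p i j)" and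
      ev: "\<forall>p < length lam. A (e p) = (\<lambda>i j. lam ! p * e p i j)"
    unfolding is_eigenlist_def by blast
  have "sum_list lam = (\<Sum>p<length lam. lam ! p)" by (simp add: sum_list_sum_nth atLeast0LessThan)
  also have "\<dots> = (\<Sum>p<length lam. \<sigma> * tinner (Rring R (e p)) (e p))"
  proof (intro sum.cong refl)
    fix p assume "p \<in> {..<length lam}"
    then have pl: "p < length lam" by simp
    have "tinner (A (e p)) (e p) = lam ! p * tinner (e p) (e p)" using ev pl by (simp add: tinner_scale)
    also have "\<dots> = lam ! p" using orth pl by simp
    finally have "lam ! p = tinner (A (e p)) (e p)" by simp
    also have "\<dots> = \<sigma> * tinner (Rring R (e p)) (e p)" unfolding As by (rule tinner_scale)
    finally show "lam ! p = \<sigma> * tinner (Rring R (e p)) (e p)" .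
  qed
  also have "\<dots> = \<sigma> * (\<Sum>p<length lam. tinner (Rring R (e p)) (e p))" by (simp add: sum_distrib_left)
  also have "\<dots> = \<sigma> * (scal R * (1/2 + 1 / real CARD('n)))"
    using trace_Rring[OF alg e_in compl] by simp
  finally show ?thesis .
qed

lemma eig_zero:
  fixes R :: "'n::finite tensor4" and A :: "'n tensor2 \<Rightarrow> 'n tensor2"
  assumes eig: "is_eigenlist A lam"
    and As: "\<And>h. A h = (\<lambda>i j. \<sigma> * Rring R h i j)" and s0: "\<sigma> \<noteq> 0"
    and z: "\<forall>p<length lam. lam ! p = 0"
  shows "\<forall>h\<in>S20. Rring R h = (\<lambda>i j. 0)"
proof
  from eig obtain e :: "nat \<Rightarrow> 'n tensor2" where
      compl: "\<forall>h \<in> S20. h = (\<lambda>i j. \<Sum>p < length lam. tinner h (e p) * e p i j)" and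
      ev: "\<forall>p < length lam. A (e p) = (\<lambda>i j. lam ! p * e p i j)"
    unfolding is_eigenlist_def by blast
  have ez: "Rring R (e p) = (\<lambda>i j. 0)" if "p < length lam" for p
  proof -
    have "(\<lambda>i j. \<sigma> * Rring R (e p) i j) = (\<lambda>i j. 0)"
      using ev z that unfolding As[symmetric] by simp
    then show ?thesis using s0 by (simp add: fun_eq_iff)
  qed
  fix h :: "'n tensor2" assume "h \<in> S20"
  then have "Rring R h = Rring R (\<lambda>i j. \<Sum>p < length lam. tinner h (e p) * e p i j)"
    using compl by metis
  also have "\<dots> = (\<lambda>i j. \<Sum>p < length lam. tinner h (e p) * Rring R (e p) i j)" by (rule Rring_lin)
  also have "\<dots> = (\<lambda>i j. 0)" using ez by simp
  finally show "Rring R h = (\<lambda>i j. 0)" .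
qed

lemma cone_lemma:
  fixes lam :: "real list" and \<alpha> \<theta> :: real
  assumes srt: "sorted lam" and len: "length lam = N"
    and a1: "1 \<le> \<alpha>" and aN: "\<alpha> < real N" and th: "\<theta> > -1"
  shows "eig_partial lam \<alpha> / \<alpha> \<ge> - \<theta> * eig_avg lam \<Longrightarrow>
           eig_avg lam \<ge> 0 \<and> (eig_avg lam = 0 \<longrightarrow> (\<forall>p<N. lam ! p = 0))"
    and "eig_partial lam \<alpha> / \<alpha> > - \<theta> * eig_avg lam \<Longrightarrow> eig_avg lam > 0"
proof -
  have ap: "\<alpha> > 0" using a1 by simp
  have Np: "real N > 0" using a1 aN by simp
  have core: "real N * eig_partial lam \<alpha> \<le> \<alpha> * sum_list lam"
    using cone_core(1)[OF srt len a1 aN] .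
  have avg: "eig_avg lam = sum_list lam / real N" unfolding eig_avg_def len ..
  have xa: "eig_partial lam \<alpha> / \<alpha> \<le> eig_avg lam"
    unfolding avg using core ap Np by (simp add: field_simps)
  have th1: "1 + \<theta> > 0" using th by simp
  {
    assume H: "eig_partial lam \<alpha> / \<alpha> \<ge> - \<theta> * eig_avg lam"
    have "(1 + \<theta>) * eig_avg lam \<ge> 0" using H xa by (simp add: algebra_simps)
    then have g: "eig_avg lam \<ge> 0" using th1 by (simp add: zero_le_mult_iff)
    have "eig_avg lam = 0 \<longrightarrow> (\<forall>p<N. lam ! p = 0)"
    proof
      assume a0: "eig_avg lam = 0"
      then have T0: "sum_list lam = 0" using avg Np by simp
      have "eig_partial lam \<alpha> / \<alpha> \<ge> 0" using H a0 by simp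
      then have "eig_partial lam \<alpha> \<ge> 0" using ap by (simp add: zero_le_divide_iff)
      then show "\<forall>p<N. lam ! p = 0" using cone_core(2)[OF srt len a1 aN T0] by simp
    qed
    with g show "eig_avg lam \<ge> 0 \<and> (eig_avg lam = 0 \<longrightarrow> (\<forall>p<N. lam ! p = 0))" by simp
  }
  {
    assume H: "eig_partial lam \<alpha> / \<alpha> > - \<theta> * eig_avg lam"
    have "(1 + \<theta>) * eig_avg lam > 0" using H xa by (simp add: algebra_simps)
    then show "eig_avg lam > 0" using th1 by (simp add: zero_less_mult_iff)
  }
qed

lemma sign_lemma:
  fixes R :: "'n::finite tensor4" and A :: "'n tensor2 \<Rightarrow> 'n tensor2" and \<alpha> \<theta> :: real
  assumes alg: "alg_curv_tensor R" and eig: "is_eigenlist A lam"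
    and As: "\<And>h. A h = (\<lambda>i j. \<sigma> * Rring R h i j)" and s0: "\<sigma> \<noteq> 0"
    and a1: "1 \<le> \<alpha>" and aN: "\<alpha> < real (dimN TYPE('n))" and th: "\<theta> > -1"
  shows "eig_partial lam \<alpha> / \<alpha> \<ge> - \<theta> * eig_avg lam \<Longrightarrow>
           \<sigma> * scal R \<ge> 0 \<and> (scal R = 0 \<longrightarrow> (\<forall>h\<in>S20. Rring R h = (\<lambda>i j. 0)) \<and> R = (\<lambda>i j k l. 0))"
    and "eig_partial lam \<alpha> / \<alpha> > - \<theta> * eig_avg lam \<Longrightarrow> \<sigma> * scal R > 0"
proof -
  have srt: "sorted lam" and len: "length lam = dimN TYPE('n)" using eig unfolding is_eigenlist_def by auto
  have Np: "real (dimN TYPE('n)) > 0" using a1 aN by simp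
  define c :: real where "c = 1/2 + 1 / real CARD('n)"
  have cp: "c > 0" unfolding c_def by (simp add: add_pos_nonneg)
  have avg: "eig_avg lam = (\<sigma> * scal R) * c / real (dimN TYPE('n))"
    unfolding eig_avg_def len eig_sum[OF alg eig As] c_def by simp
  have pos: "eig_avg lam \<ge> 0 \<longleftrightarrow> \<sigma> * scal R \<ge> 0"
    unfolding avg using cp Np by (simp add: zero_le_divide_iff zero_le_mult_iff)
  have spos: "eig_avg lam > 0 \<longleftrightarrow> \<sigma> * scal R > 0"
    unfolding avg using cp Np by (simp add: zero_less_divide_iff zero_less_mult_iff)
  {
    assume H: "eig_partial lam \<alpha> / \<alpha> \<ge> - \<theta> * eig_avg lam"
    note cl = cone_lemma(1)[OF srt len a1 aN th H]
    have "scal R = 0 \<longrightarrow> (\<forall>h\<in>S20. Rring R h = (\<lambda>i j. 0)) \<and> R = (\<lambda>i j k l. 0)"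
    proof
      assume "scal R = 0"
      then have "eig_avg lam = 0" unfolding avg by simp
      then have "\<forall>p<length lam. lam ! p = 0" using cl len by simp
      then have Z: "\<forall>h\<in>S20. Rring R h = (\<lambda>i j. 0)" using eig_zero[OF eig As s0] by blast
      then show "(\<forall>h\<in>S20. Rring R h = (\<lambda>i j. 0)) \<and> R = (\<lambda>i j k l. 0)" using R_zero[OF alg Z] by simp
    qed
    then show "\<sigma> * scal R \<ge> 0 \<and> (scal R = 0 \<longrightarrow> (\<forall>h\<in>S20. Rring R h = (\<lambda>i j. 0)) \<and> R = (\<lambda>i j k l. 0))"
      using cl pos by simp
  }
  {
    assume H: "eig_partial lam \<alpha> / \<alpha> > - \<theta> * eig_avg lam"
    show "\<sigma> * scal R > 0" using cone_lemma(2)[OF srt len a1 aN th H] spos by simp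
  }
qed

theorem proposition2p7:
  fixes R :: "'n::finite tensor4" and \<alpha> \<theta> :: real
  assumes "CARD('n) \<ge> 3"
    and "1 \<le> \<alpha>" and "\<alpha> < real (dimN TYPE('n))"
    and "\<theta> > -1"
    and "alg_curv_tensor R"
  shows "(in_cone (Rring R) \<alpha> \<theta> \<longrightarrow>
            scal R \<ge> 0 \<and>
            (scal R = 0 \<longrightarrow> (\<forall>h \<in> S20. Rring R h = (\<lambda>i j. 0)) \<and> R = (\<lambda>i j k l. 0)))
       \<and> (in_cone (\<lambda>h. - Rring R h) \<alpha> \<theta> \<longrightarrow>
            scal R \<le> 0 \<and>
            (scal R = 0 \<longrightarrow> (\<forall>h \<in> S20. Rring R h = (\<lambda>i j. 0)) \<and> R = (\<lambda>i j k l. 0)))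
       \<and> (in_cone_interior (Rring R) \<alpha> \<theta> \<longrightarrow> scal R > 0)
       \<and> (in_cone_interior (\<lambda>h. - Rring R h) \<alpha> \<theta> \<longrightarrow> scal R < 0)"
proof -
  have A1: "\<And>h. Rring R h = (\<lambda>i j. 1 * Rring R h i j)" by simp
  have A2: "\<And>h. (\<lambda>h. - Rring R h) h = (\<lambda>i j. (-1) * Rring R h i j)" by (simp add: fun_eq_iff)
  have s1: "(1::real) \<noteq> 0" and s2: "(-1::real) \<noteq> 0" by simp_all
  note L1 = sign_lemma[OF assms(5) _ A1 s1 assms(2,3,4)]
  note L2 = sign_lemma[OF assms(5) _ A2 s2 assms(2,3,4)]
  have P1: "in_cone (Rring R) \<alpha> \<theta> \<longrightarrow>
            scal R \<ge> 0 \<and>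
            (scal R = 0 \<longrightarrow> (\<forall>h \<in> S20. Rring R h = (\<lambda>i j. 0)) \<and> R = (\<lambda>i j k l. 0))"
  proof
    assume "in_cone (Rring R) \<alpha> \<theta>"
    then obtain lam where "is_eigenlist (Rring R) lam" "eig_partial lam \<alpha> / \<alpha> \<ge> - \<theta> * eig_avg lam"
      unfolding in_cone_def by blast
    from L1(1)[OF this] show "scal R \<ge> 0 \<and>
            (scal R = 0 \<longrightarrow> (\<forall>h \<in> S20. Rring R h = (\<lambda>i j. 0)) \<and> R = (\<lambda>i j k l. 0))" by simp
  qed
  have P2: "in_cone (\<lambda>h. - Rring R h) \<alpha> \<theta> \<longrightarrow>
            scal R \<le> 0 \<and>
            (scal R = 0 \<longrightarrow> (\<forall>h \<in> S20. Rring R h = (\<lambda>i j. 0)) \<and> R = (\<lambda>i j k l. 0))"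
  proof
    assume "in_cone (\<lambda>h. - Rring R h) \<alpha> \<theta>"
    then obtain lam where "is_eigenlist (\<lambda>h. - Rring R h) lam" "eig_partial lam \<alpha> / \<alpha> \<ge> - \<theta> * eig_avg lam"
      unfolding in_cone_def by blast
    from L2(1)[OF this] show "scal R \<le> 0 \<and>
            (scal R = 0 \<longrightarrow> (\<forall>h \<in> S20. Rring R h = (\<lambda>i j. 0)) \<and> R = (\<lambda>i j k l. 0))" by simp
  qed
  have P3: "in_cone_interior (Rring R) \<alpha> \<theta> \<longrightarrow> scal R > 0"
  proof
    assume "in_cone_interior (Rring R) \<alpha> \<theta>"
    then obtain lam where "is_eigenlist (Rring R) lam" "eig_partial lam \<alpha> / \<alpha> > - \<theta> * eig_avg lam"
      unfolding in_cone_interior_def by blast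
    from L1(2)[OF this] show "scal R > 0" by simp
  qed
  have P4: "in_cone_interior (\<lambda>h. - Rring R h) \<alpha> \<theta> \<longrightarrow> scal R < 0"
  proof
    assume "in_cone_interior (\<lambda>h. - Rring R h) \<alpha> \<theta>"
    then obtain lam where "is_eigenlist (\<lambda>h. - Rring R h) lam" "eig_partial lam \<alpha> / \<alpha> > - \<theta> * eig_avg lam"
      unfolding in_cone_interior_def by blast
    from L2(2)[OF this] show "scal R < 0" by simp
  qed
  from P1 P2 P3 P4 show ?thesis by blast
qed

end
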